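(* Let $m \geq 0$ be a fixed integer, and for $T>e$ put $\Delta = \Delta(T) = 1/\log^{m+2} T$. Then the following two statements are equivalent: \begin{enumerate} \item For every $\epsilon > 0$, $\zeta^{(m)}(1+it) = O(\log^{\epsilon} t)$ as $t \to \infty$. \item For every $\epsilon > 0$ and every positive integer $k$, \[ \frac{1}{2\Delta} \int_{T-\Delta}^{T+\Delta} \bigl|\zeta^{(m)}(1+it)\bigr|^{2k}\, dt = O(\log^{\epsilon} T) \quad \text{as } T \to \infty . \] \end{enumerate} (The implied $O$-constants may depend on $m$, $\epsilon$ and $k$.)
   Context: $\zeta(s)$ denotes the Riemann zeta function, $s=\sigma+it$, defined by $\sum_{n\ge1} n^{-s}$ for $\sigma>1$ and meromorphically continued to $\mathbb{C}$ with only a simple pole at $s=1$; $\zeta^{(m)}$ is its $m$-th derivative with respect to $s$, and $\zeta^{(m)}(1+it)$ is its value on the line $\sigma=1$ for real $t$. *)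

theory Defs
  imports "HOL-Complex_Analysis.Complex_Analysis" "HOL-Library.Landau_Symbols"
begin

text \<open>The Riemann zeta function: the (unique, by the identity theorem) function holomorphic
  on the complex plane minus the point 1 that agrees with the Dirichlet series
  sum over n of n to the power -s on the half-plane Re s > 1.\<close>
definition riemann_zeta :: "complex \<Rightarrow> complex" where
  "riemann_zeta = (SOME f. f holomorphic_on (- {1}) \<and>
       (\<forall>s. 1 < Re s \<longrightarrow> f s = (\<Sum>n. 1 / (of_nat (Suc n)) powr s)))"

definition zeta_deriv :: "nat \<Rightarrow> complex \<Rightarrow> complex" where
  "zeta_deriv m = (deriv ^^ m) riemann_zeta"

definition Delta :: "nat \<Rightarrow> real \<Rightarrow> real" where
  "Delta m T = 1 / (ln T) ^ (m + 2)"

end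

theory Submission
  imports Defs
begin

definition Rm :: "nat \<Rightarrow> complex \<Rightarrow> complex \<Rightarrow> complex" where
  "Rm K a w = (1 + w) powr a - (\<Sum>j\<le>K. (a gchoose j) * w ^ j)"

lemma Rm_deriv0:
  assumes "1 + w \<notin> \<real>\<^sub>\<le>\<^sub>0"
  shows "(Rm 0 a has_field_derivative a * (1 + w) powr (a - 1)) (at w)"
proof -
  have "((\<lambda>w. (1 + w) powr a) has_field_derivative a * (1 + w) powr (a - 1)) (at w)"
    using has_field_derivative_powr[OF assms, of a] DERIV_chain2[of "\<lambda>z. z powr a" "a * (1+w) powr (a-1)" "\<lambda>w. 1 + w" w 1]
    using assms by (auto intro!: derivative_eq_intros)
  then have "((\<lambda>w. (1 + w) powr a - 1) has_field_derivative a * (1 + w) powr (a - 1) - 0) (at w)"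
    by (intro DERIV_diff DERIV_const)
  moreover have "Rm 0 a = (\<lambda>w. (1 + w) powr a - 1)" by (auto simp: Rm_def fun_eq_iff)
  ultimately show ?thesis by simp
qed

lemma Rm_derivSuc:
  assumes "1 + w \<notin> \<real>\<^sub>\<le>\<^sub>0"
  shows "(Rm (Suc K) a has_field_derivative a * Rm K (a - 1) w) (at w)"
proof -
  have h1: "((\<lambda>w. (1 + w) powr a) has_field_derivative a * (1 + w) powr (a - 1)) (at w)"
    using has_field_derivative_powr[OF assms, of a] DERIV_chain2[of "\<lambda>z. z powr a" "a * (1+w) powr (a-1)" "\<lambda>w. 1 + w" w 1]
    using assms by (auto intro!: derivative_eq_intros)
  have h2: "((\<lambda>w. \<Sum>j\<le>Suc K. (a gchoose j) * w ^ j) has_field_derivative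
       (\<Sum>j\<le>Suc K. (a gchoose j) * (of_nat j * w ^ (j - 1)))) (at w)"
    by (intro DERIV_sum DERIV_cmult) (use DERIV_power[OF DERIV_ident] in simp)
  have "(\<Sum>j\<le>Suc K. (a gchoose j) * (of_nat j * w ^ (j - 1))) = (\<Sum>i\<le>K. (a gchoose Suc i) * (of_nat (Suc i) * w ^ i))"
    by (subst sum.atMost_Suc_shift) simp
  also have "\<dots> = (\<Sum>i\<le>K. a * (((a - 1) gchoose i) * w ^ i))"
  proof (intro sum.cong refl)
    fix i
    have h: "of_nat (Suc i) * (a gchoose Suc i) = a * ((a - 1) gchoose i)" by (rule gbinomial_absorption)
    have "(a gchoose Suc i) * (of_nat (Suc i) * w ^ i) = (of_nat (Suc i) * (a gchoose Suc i)) * w ^ i" by (simp only: mult_ac)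
    also have "\<dots> = a * ((a - 1) gchoose i) * w ^ i" by (simp only: h)
    finally show "(a gchoose Suc i) * (of_nat (Suc i) * w ^ i) = a * (((a - 1) gchoose i) * w ^ i)" by (simp only: mult_ac)
  qed
  also have "\<dots> = a * (\<Sum>i\<le>K. ((a - 1) gchoose i) * w ^ i)" by (simp add: sum_distrib_left)
  finally have e: "(\<Sum>j\<le>Suc K. (a gchoose j) * (of_nat j * w ^ (j - 1))) = a * (\<Sum>i\<le>K. ((a - 1) gchoose i) * w ^ i)" .
  have "(Rm (Suc K) a has_field_derivative a * (1 + w) powr (a - 1) - a * (\<Sum>i\<le>K. ((a - 1) gchoose i) * w ^ i)) (at w)"
    unfolding Rm_def using DERIV_diff[OF h1 h2] e by (simp add: fun_diff_def)
  then show ?thesis by (simp add: Rm_def algebra_simps)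
qed

lemma Rm_zero [simp]: "Rm K a 0 = 0"
  by (simp add: Rm_def zero_power)

lemma powr_le_two: "1 \<le> (x::real) \<Longrightarrow> x \<le> 2 \<Longrightarrow> x powr e \<le> 2 powr \<bar>e\<bar>"
proof (cases "e \<ge> 0")
  case True
  assume "1 \<le> x" "x \<le> 2"
  then have "x powr e \<le> 2 powr e" using True by (intro powr_mono2) auto
  also have "\<dots> \<le> 2 powr \<bar>e\<bar>" by (intro powr_mono) auto
  finally show ?thesis .
next
  case False
  assume "1 \<le> x" "x \<le> 2"
  then have "x powr e \<le> x powr 0" using False by (intro powr_mono) auto
  then have "x powr e \<le> 1" using \<open>1 \<le> x\<close> by simp
  also have "1 \<le> 2 powr \<bar>e\<bar>" by (simp add: ge_one_powr_ge_zero)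
  finally show ?thesis .
qed

lemma seg_real_mem:
  assumes "z \<in> closed_segment 0 (complex_of_real u)" "0 \<le> u"
  obtains v where "z = of_real v" "0 \<le> v" "v \<le> u"
proof -
  have "closed_segment (complex_of_real 0) (of_real u) = of_real ` closed_segment 0 u" by (rule closed_segment_of_real)
  then have "z \<in> of_real ` closed_segment 0 u" using assms(1) by simp
  then show ?thesis using assms(2) that by (auto simp: closed_segment_eq_real_ivl)
qed

lemma Rm_bound:
  assumes "0 \<le> u" "u \<le> 1"
  shows "norm (Rm K a (of_real u)) \<le> (norm a + K)^(K+1) * 2 powr (\<bar>Re a\<bar> + K + 1) * u^(K+1)"
  using assms
proof (induction K arbitrary: a u)
  case 0
  have "norm (Rm 0 a (of_real u) - Rm 0 a 0) \<le> (norm a * 2 powr (\<bar>Re a\<bar> + 1)) * norm (complex_of_real u - 0)"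
  proof (rule field_differentiable_bound[of "closed_segment 0 (of_real u)"])
    fix z assume z: "z \<in> closed_segment 0 (complex_of_real u)"
    then obtain v where v: "z = of_real v" "0 \<le> v" "v \<le> u" using seg_real_mem 0 by blast
    have e1: "1 + z = of_real (1 + v)" using v by simp
    have "(of_real (1 + v) :: complex) \<notin> \<real>\<^sub>\<le>\<^sub>0" using v by (simp only: nonpos_Reals_of_real_iff)
    then have nr: "1 + z \<notin> \<real>\<^sub>\<le>\<^sub>0" unfolding e1 .
    show "(Rm 0 a has_field_derivative a * (1 + z) powr (a - 1)) (at z within closed_segment 0 (complex_of_real u))"
      using Rm_deriv0[OF nr] by (rule has_field_derivative_at_within)
    have "norm ((1 + z) powr (a - 1)) = (1 + v) powr (Re a - 1)"
      using v by (simp add: norm_powr_real_powr)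
    also have "\<dots> \<le> 2 powr \<bar>Re a - 1\<bar>" using v 0 by (intro powr_le_two) auto
    also have "\<dots> \<le> 2 powr (\<bar>Re a\<bar> + 1)" by (intro powr_mono) auto
    finally show "norm (a * (1 + z) powr (a - 1)) \<le> norm a * 2 powr (\<bar>Re a\<bar> + 1)"
      by (simp add: norm_mult mult_left_mono)
  qed (auto)
  then show ?case using 0 by simp
next
  case (Suc K)
  have "norm (Rm (Suc K) a (of_real u) - Rm (Suc K) a 0) \<le> 
     (norm a * ((norm a + Suc K)^(K+1) * 2 powr (\<bar>Re a\<bar> + Suc K + 1) * u^(K+1))) * norm (complex_of_real u - 0)"
  proof (rule field_differentiable_bound[of "closed_segment 0 (of_real u)"])
    fix z assume z: "z \<in> closed_segment 0 (complex_of_real u)"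
    then obtain v where v: "z = of_real v" "0 \<le> v" "v \<le> u" using seg_real_mem Suc.prems by blast
    have e1: "1 + z = of_real (1 + v)" using v by simp
    have "(of_real (1 + v) :: complex) \<notin> \<real>\<^sub>\<le>\<^sub>0" using v by (simp only: nonpos_Reals_of_real_iff)
    then have nr: "1 + z \<notin> \<real>\<^sub>\<le>\<^sub>0" unfolding e1 .
    show "(Rm (Suc K) a has_field_derivative a * Rm K (a - 1) z) (at z within closed_segment 0 (complex_of_real u))"
      using Rm_derivSuc[OF nr] by (rule has_field_derivative_at_within)
    have "norm (Rm K (a - 1) z) \<le> (norm (a - 1) + K)^(K+1) * 2 powr (\<bar>Re (a - 1)\<bar> + K + 1) * v^(K+1)"
      unfolding v(1) by (rule Suc.IH) (use v Suc.prems in auto)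
    also have "\<dots> \<le> (norm a + Suc K)^(K+1) * 2 powr (\<bar>Re a\<bar> + Suc K + 1) * u^(K+1)"
      using v norm_triangle_ineq4[of a 1]
      by (intro mult_mono power_mono powr_mono) (auto simp: abs_if)
    finally show "norm (a * Rm K (a - 1) z) \<le> norm a * ((norm a + Suc K)^(K+1) * 2 powr (\<bar>Re a\<bar> + Suc K + 1) * u^(K+1))"
      by (simp add: norm_mult mult_left_mono)
  qed (auto)
  also have "\<dots> \<le> (norm a + Suc K)^(Suc K+1) * 2 powr (\<bar>Re a\<bar> + Suc K + 1) * u^(Suc K+1)"
  proof -
    have "norm a \<le> norm a + Suc K" by simp
    then have "norm a * (norm a + Suc K)^(K+1) \<le> (norm a + Suc K)^(Suc K+1)"
      by (simp add: mult_right_mono)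
    then have "norm a * (norm a + Suc K)^(K+1) * (2 powr (\<bar>Re a\<bar> + Suc K + 1) * u^(K+2)) \<le> (norm a + Suc K)^(Suc K+1) * (2 powr (\<bar>Re a\<bar> + Suc K + 1) * u^(K+2))"
      using Suc.prems by (intro mult_right_mono) auto
    then show ?thesis using Suc.prems by (simp add: algebra_simps power_Suc)
  qed
  finally show ?case by simp
qed

lemma series_holo:
  fixes f :: "nat \<Rightarrow> complex \<Rightarrow> complex"
  assumes S: "open S" and hol: "\<And>n. f n holomorphic_on S"
    and bd: "\<And>z. z \<in> S \<Longrightarrow> \<exists>r>0. cball z r \<subseteq> S \<and> (\<exists>M. summable M \<and> (\<forall>n. \<forall>w\<in>cball z r. norm (f n w) \<le> M n))"
  shows "(\<lambda>s. \<Sum>n. f n s) holomorphic_on S"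
proof -
  have "\<exists>f'. DERIV (\<lambda>s. \<Sum>n. f n s) z :> f'" if z: "z \<in> S" for z
  proof -
    obtain r M where r: "r > 0" "cball z r \<subseteq> S" "summable M" "\<And>n w. w \<in> cball z r \<Longrightarrow> norm (f n w) \<le> M n"
      using bd[OF z] by blast
    have ul: "uniform_limit (cball z r) (\<lambda>n x. \<Sum>i<n. f i x) (\<lambda>x. \<Sum>i. f i x) sequentially"
      by (rule Weierstrass_m_test) (use r in auto)
    have "\<forall>\<^sub>F n in sequentially. continuous_on (cball z r) (\<lambda>x. \<Sum>i<n. f i x) \<and> (\<lambda>x. \<Sum>i<n. f i x) holomorphic_on ball z r"
    proof (intro always_eventually allI conjI)
      fix n
      have h: "(\<lambda>x. \<Sum>i<n. f i x) holomorphic_on S" using hol by (intro holomorphic_intros) auto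
      show "continuous_on (cball z r) (\<lambda>x. \<Sum>i<n. f i x)"
        using h r(2) holomorphic_on_imp_continuous_on holomorphic_on_subset by blast
      show "(\<lambda>x. \<Sum>i<n. f i x) holomorphic_on ball z r"
        using h r(2) ball_subset_cball holomorphic_on_subset by blast
    qed
    then obtain "(\<lambda>x. \<Sum>i. f i x) holomorphic_on ball z r"
      using holomorphic_uniform_limit[OF _ ul] by auto
    then show ?thesis using r(1)
      by (metis centre_in_ball field_differentiable_def holomorphic_on_imp_differentiable_at open_ball)
  qed
  then show ?thesis using S by (simp add: holomorphic_on_open)
qed

lemma holo_gchoose [holomorphic_intros]:
  "f holomorphic_on S \<Longrightarrow> (\<lambda>s. (f s) gchoose j) holomorphic_on S"
  unfolding gbinomial_altdef_of_nat by (intro holomorphic_intros) auto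

lemma Rm_holo [holomorphic_intros]:
  assumes "f holomorphic_on S" "1 + w \<noteq> 0"
  shows "(\<lambda>s. Rm K (f s) w) holomorphic_on S"
  unfolding Rm_def using assms by (intro holomorphic_intros) auto

definition TT :: "nat \<Rightarrow> nat \<Rightarrow> complex \<Rightarrow> complex" where
  "TT K n s = of_nat (Suc n) powr (1 - s) * Rm K (1 - s) (1 / of_nat (Suc n))"

definition ST :: "nat \<Rightarrow> complex \<Rightarrow> complex" where
  "ST K s = (\<Sum>n. TT K n s)"

lemma T_holo: "TT K n holomorphic_on S"
proof -
  have e: "1 + 1 / (of_nat (Suc n) :: complex) = of_real (1 + 1 / real (Suc n))" by simp
  have "(of_real (1 + 1 / real (Suc n)) :: complex) \<noteq> 0"
    by (simp only: of_real_eq_0_iff) (smt (verit) of_nat_0_le_iff divide_nonneg_nonneg)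
  then have "1 + 1 / (of_nat (Suc n) :: complex) \<noteq> 0" unfolding e .
  then show ?thesis unfolding TT_def[abs_def] by (intro holomorphic_intros) auto
qed

lemma T_bound:
  "norm (TT K n s) \<le> (norm (1 - s) + K)^(K+1) * 2 powr (\<bar>1 - Re s\<bar> + K + 1) * real (Suc n) powr (- Re s - K)"
proof -
  define m where "m = real (Suc n)"
  have m: "m \<ge> 1" by (simp add: m_def)
  have e1: "(1 / of_nat (Suc n) :: complex) = of_real (1 / m)" by (simp add: m_def)
  have n1: "norm (of_nat (Suc n) powr (1 - s) :: complex) = m powr (1 - Re s)"
    using norm_powr_real_powr[of "of_nat (Suc n)" "1 - s"] by (simp add: m_def)
  have r: "norm (Rm K (1 - s) (of_real (1 / m))) \<le> (norm (1 - s) + K)^(K+1) * 2 powr (\<bar>Re (1 - s)\<bar> + K + 1) * (1 / m)^(K+1)"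
    using m by (intro Rm_bound) auto
  have "norm (TT K n s) = m powr (1 - Re s) * norm (Rm K (1 - s) (of_real (1 / m)))"
    unfolding TT_def e1 norm_mult n1 ..
  also have "\<dots> \<le> m powr (1 - Re s) * ((norm (1 - s) + K)^(K+1) * 2 powr (\<bar>Re (1 - s)\<bar> + K + 1) * (1 / m)^(K+1))"
    by (intro mult_left_mono r) auto
  also have "(1 / m)^(K+1) = m powr (- real (K + 1))"
  proof -
    have "m powr (- real (K + 1)) = inverse (m powr real (K + 1))" by (rule powr_minus)
    also have "m powr real (K + 1) = m ^ (K + 1)" using m by (intro powr_realpow) auto
    finally show ?thesis by (simp add: power_one_over divide_inverse power_inverse)
  qed
  also have "m powr (1 - Re s) * ((norm (1 - s) + K)^(K+1) * 2 powr (\<bar>Re (1 - s)\<bar> + K + 1) * m powr (- real (K + 1)))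
     = (norm (1 - s) + K)^(K+1) * 2 powr (\<bar>1 - Re s\<bar> + K + 1) * (m powr (1 - Re s) * m powr (- real (K + 1)))"
    by simp
  also have "m powr (1 - Re s) * m powr (- real (K + 1)) = m powr (- Re s - K)"
    by (simp add: powr_add[symmetric])
  finally show ?thesis by (simp add: m_def)
qed

lemma summable_powr_Suc: "p < -1 \<Longrightarrow> summable (\<lambda>n. real (Suc n) powr p)"
  using summable_real_powr_iff[of p] summable_Suc_iff[of "\<lambda>n. real n powr p"] by simp

lemma ST_holo: "ST K holomorphic_on {s. Re s > 1 - real K}"
  unfolding ST_def[abs_def]
proof (rule series_holo)
  show "open {s. Re s > 1 - real K}" by (simp add: open_halfspace_Re_gt)
  show "TT K n holomorphic_on {s. Re s > 1 - real K}" for n by (rule T_holo)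
  fix z assume z: "z \<in> {s. Re s > 1 - real K}"
  define r where "r = (Re z - (1 - real K)) / 2"
  have r: "r > 0" using z by (simp add: r_def)
  have sub: "cball z r \<subseteq> {s. Re s > 1 - real K}"
  proof
    fix w assume "w \<in> cball z r"
    then have "\<bar>Re z - Re w\<bar> \<le> r" using abs_Re_le_cmod[of "z - w"] by (simp add: dist_norm)
    moreover have "Re z - Re w \<le> \<bar>Re z - Re w\<bar>" by (rule abs_ge_self)
    ultimately show "w \<in> {s. Re s > 1 - real K}" using z unfolding r_def by simp
  qed
  define C where "C = (norm (1 - z) + r + K)^(K+1) * 2 powr (\<bar>1 - Re z\<bar> + r + K + 1)"
  have "\<forall>n. \<forall>w\<in>cball z r. norm (TT K n w) \<le> C * real (Suc n) powr (- (Re z - r) - K)"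
  proof (intro allI ballI)
    fix n w assume w: "w \<in> cball z r"
    have d: "norm (z - w) \<le> r" using w by (simp add: dist_norm)
    have dRe: "\<bar>Re z - Re w\<bar> \<le> r" using abs_Re_le_cmod[of "z - w"] d by simp
    have "norm (TT K n w) \<le> (norm (1 - w) + K)^(K+1) * 2 powr (\<bar>1 - Re w\<bar> + K + 1) * real (Suc n) powr (- Re w - K)"
      by (rule T_bound)
    also have "\<dots> \<le> C * real (Suc n) powr (- (Re z - r) - K)"
      unfolding C_def
    proof (intro mult_mono power_mono powr_mono add_mono order_refl)
      show "norm (1 - w) \<le> norm (1 - z) + r" using norm_triangle_ineq[of "1 - z" "z - w"] d by simp
      show "\<bar>1 - Re w\<bar> \<le> \<bar>1 - Re z\<bar> + r" using dRe by linarith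
      show "- Re w - real K \<le> - (Re z - r) - real K" using dRe by linarith
    qed (use r in \<open>auto intro!: mult_nonneg_nonneg\<close>)
    finally show "norm (TT K n w) \<le> C * real (Suc n) powr (- (Re z - r) - K)" .
  qed
  moreover have "summable (\<lambda>n. C * real (Suc n) powr (- (Re z - r) - K))"
    using z by (intro summable_mult summable_powr_Suc) (simp add: r_def field_simps)
  ultimately show "\<exists>r>0. cball z r \<subseteq> {s. Re s > 1 - real K} \<and> (\<exists>M. summable M \<and> (\<forall>n. \<forall>w\<in>cball z r. norm (TT K n w) \<le> M n))"
    using r sub by blast
qed

definition Dz :: "complex \<Rightarrow> complex" where
  "Dz s = (\<Sum>n. 1 / (of_nat (Suc n)) powr s)"

lemma Dz_sums: assumes "Re w > 1" shows "(\<lambda>n. of_nat (Suc n) powr (- w)) sums Dz w"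
proof -
  have "summable (\<lambda>n. norm (of_nat (Suc n) powr (- w) :: complex))"
  proof -
    have "norm (of_nat (Suc n) powr (- w) :: complex) = real (Suc n) powr (- Re w)" for n
      using norm_powr_real_powr[of "of_nat (Suc n)" "- w"] by simp
    then show ?thesis using assms summable_powr_Suc[of "- Re w"] by simp
  qed
  then have "summable (\<lambda>n. of_nat (Suc n) powr (- w) :: complex)" by (rule summable_norm_cancel)
  moreover have "(\<lambda>n. of_nat (Suc n) powr (- w) :: complex) = (\<lambda>n. 1 / (of_nat (Suc n)) powr w)"
    by (simp add: powr_minus divide_inverse)
  ultimately show ?thesis unfolding Dz_def by (simp add: summable_sums)
qed

lemma T_alt:
  "TT K n s = of_nat (Suc (Suc n)) powr (1 - s) -
     (\<Sum>j\<le>K. ((1 - s) gchoose j) * of_nat (Suc n) powr (1 - s - of_nat j))"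
proof -
  define m :: complex where "m = of_nat (Suc n)"
  have m0: "m \<noteq> 0" unfolding m_def of_nat_eq_0_iff by simp
  have mR: "m \<in> \<real>" "Re m \<ge> 0" by (auto simp: m_def)
  have m1R: "1 + 1 / m \<in> \<real>" "Re (1 + 1 / m) \<ge> 0" 
  proof -
    have "1 + 1 / m = of_real (1 + 1 / real (Suc n))" by (simp add: m_def)
    then show "1 + 1 / m \<in> \<real>" "Re (1 + 1 / m) \<ge> 0" by (auto simp del: of_real_add of_real_divide)
  qed
  have a: "m powr (1 - s) * (1 + 1 / m) powr (1 - s) = of_nat (Suc (Suc n)) powr (1 - s)"
  proof -
    have "m powr (1 - s) * (1 + 1 / m) powr (1 - s) = (m * (1 + 1 / m)) powr (1 - s)"
      using powr_times_real[OF mR(1) m1R(1) mR(2) m1R(2)] by simp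
    also have "m * (1 + 1 / m) = of_nat (Suc (Suc n))" using m0 by (simp add: m_def field_simps)
    finally show ?thesis .
  qed
  have b: "m powr (1 - s) * (1 / m) ^ j = m powr (1 - s - of_nat j)" for j
  proof -
    have "m powr (1 - s - of_nat j) = m powr (1 - s) / m powr (of_nat j)" by (rule powr_diff)
    also have "m powr (of_nat j) = m ^ j" using m0 by (simp add: powr_nat')
    finally show ?thesis by (simp add: power_one_over divide_inverse power_inverse)
  qed
  have "TT K n s = m powr (1 - s) * (1 + 1 / m) powr (1 - s) - (\<Sum>j\<le>K. ((1 - s) gchoose j) * (m powr (1 - s) * (1 / m) ^ j))"
    unfolding TT_def Rm_def m_def[symmetric] by (simp add: algebra_simps sum_distrib_left)
  also have "\<dots> = of_nat (Suc (Suc n)) powr (1 - s) - (\<Sum>j\<le>K. ((1 - s) gchoose j) * m powr (1 - s - of_nat j))"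
    unfolding a b ..
  finally show ?thesis by (simp add: m_def)
qed

lemma ST_identity:
  assumes s: "Re s > 1"
  shows "ST K s = -1 - (\<Sum>j\<in>{1..K}. ((1 - s) gchoose j) * Dz (s + of_nat j - 1))"
proof -
  define f where "f n = (of_nat (Suc n) :: complex) powr (1 - s)" for n
  have lim: "f \<longlonglongrightarrow> 0"
  proof -
    have nf: "norm (f n) = real (Suc n) powr (1 - Re s)" for n
      using norm_powr_real_powr[of "of_nat (Suc n)" "1 - s"] by (simp add: f_def)
    have "(\<lambda>n. real (Suc n) powr (1 - Re s)) \<longlonglongrightarrow> 0"
      using s by (intro tendsto_neg_powr filterlim_compose[OF filterlim_real_sequentially filterlim_Suc]) auto
    then show ?thesis by (subst tendsto_norm_zero_iff[symmetric]) (simp add: nf)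
  qed
  have tel: "(\<lambda>n. f (Suc n) - f n) sums (0 - f 0)" by (rule telescope_sums[OF lim])
  have f0: "f 0 = 1" by (simp add: f_def)
  have sj: "(\<lambda>n. ((1 - s) gchoose j) * of_nat (Suc n) powr (1 - s - of_nat j)) sums (((1 - s) gchoose j) * Dz (s + of_nat j - 1))"
    if j: "j \<in> {1..K}" for j
  proof -
    have "Re (s + of_nat j - 1) > 1" using s j by simp
    from Dz_sums[OF this] have "(\<lambda>n. of_nat (Suc n) powr (1 - s - of_nat j)) sums Dz (s + of_nat j - 1)"
      by (simp add: algebra_simps)
    then show ?thesis by (rule sums_mult)
  qed
  have ss: "(\<lambda>n. \<Sum>j\<in>{1..K}. ((1 - s) gchoose j) * of_nat (Suc n) powr (1 - s - of_nat j)) sums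
        (\<Sum>j\<in>{1..K}. ((1 - s) gchoose j) * Dz (s + of_nat j - 1))"
    by (rule sums_sum) (rule sj)
  have split: "(\<Sum>j\<le>K. ((1 - s) gchoose j) * of_nat (Suc n) powr (1 - s - of_nat j)) =
       f n + (\<Sum>j\<in>{1..K}. ((1 - s) gchoose j) * of_nat (Suc n) powr (1 - s - of_nat j))" for n
  proof -
    have "{..K} = insert 0 {1..K}" by auto
    then show ?thesis by (simp add: f_def)
  qed
  have "TT K n s = (f (Suc n) - f n) - (\<Sum>j\<in>{1..K}. ((1 - s) gchoose j) * of_nat (Suc n) powr (1 - s - of_nat j))" for n
    unfolding T_alt split by (simp add: f_def)
  then have "(\<lambda>n. TT K n s) sums ((0 - f 0) - (\<Sum>j\<in>{1..K}. ((1 - s) gchoose j) * Dz (s + of_nat j - 1)))"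
    using sums_diff[OF tel ss] by simp
  then show ?thesis unfolding ST_def f0 by (simp add: sums_iff)
qed

lemma convex_connected_Re_gt: "connected {s::complex. Re s > c}"
  by (simp add: convex_connected convex_halfspace_Re_gt)

lemma connected_Re_gt_minus1: "connected ({s::complex. Re s > c} - {1})"
  by (intro connected_open_diff_countable convex_connected_Re_gt) (auto simp: open_halfspace_Re_gt)

lemma T1_at1: "TT 1 n 1 = 0"
proof -
  have "1 + 1 / (of_nat (Suc n) :: complex) \<noteq> 0"
  proof -
    have e: "1 + 1 / (of_nat (Suc n) :: complex) = of_real (1 + 1 / real (Suc n))" by simp
    have "(of_real (1 + 1 / real (Suc n)) :: complex) \<noteq> 0"
      by (simp only: of_real_eq_0_iff) (smt (verit) of_nat_0_le_iff divide_nonneg_nonneg)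
    then show ?thesis unfolding e .
  qed
  then show ?thesis by (simp add: TT_def Rm_def)
qed

lemma ST1_at1: "ST 1 1 = 0"
  unfolding ST_def T1_at1 by simp

lemma ST1_at1': "ST (Suc 0) 1 = 0"
  using ST1_at1 by simp

definition E0 :: "complex \<Rightarrow> complex" where
  "E0 s = (if s = 1 then deriv (ST 1) 1 else ST 1 s / (s - 1))"

lemma E0_holo: "E0 holomorphic_on {s. Re s > 0}"
proof (rule no_isolated_singularity'[where K = "{1}"])
  have h: "ST 1 holomorphic_on {s. Re s > 0}" using ST_holo[of 1] by simp
  have "(\<lambda>s. ST 1 s / (s - 1)) holomorphic_on {s. Re s > 0} - {1}"
    by (intro holomorphic_intros holomorphic_on_subset[OF h]) auto
  then show "E0 holomorphic_on {s. Re s > 0} - {1}"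
    by (rule holomorphic_transform) (auto simp: E0_def)
  show "open {s. Re s > (0::real)}" by (simp add: open_halfspace_Re_gt)
  fix z :: complex assume "z \<in> {1}"
  then have z: "z = 1" by simp
  have "(ST 1 has_field_derivative deriv (ST 1) 1) (at 1)"
    using h by (intro holomorphic_derivI[of _ "{s. Re s > 0}"]) (auto simp: open_halfspace_Re_gt)
  then have "((\<lambda>y. (ST 1 y - ST 1 1) / (y - 1)) \<longlongrightarrow> deriv (ST 1) 1) (at 1 within {s. Re s > 0})"
    using has_field_derivative_iff has_field_derivative_at_within by blast
  then have "(E0 \<longlongrightarrow> deriv (ST 1) 1) (at 1 within {s. Re s > 0})"
  proof (rule tendsto_cong[THEN iffD1, rotated])
    show "\<forall>\<^sub>F y in at 1 within {s. Re s > 0}. (ST 1 y - ST 1 1) / (y - 1) = E0 y"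
      by (auto simp: eventually_at_filter E0_def ST1_at1')
  qed
  then show "(E0 \<longlongrightarrow> E0 z) (at z within {s. Re s > 0})" by (simp add: z E0_def)
qed auto

definition GE :: "nat \<Rightarrow> (complex \<Rightarrow> complex) \<Rightarrow> complex \<Rightarrow> complex" where
  "GE K E s = (1 + (\<Sum>j\<in>{2..K}. ((1 - s) gchoose j) * E (s + of_nat j - 1) - ((1 - s) gchoose (j - 1)) / of_nat j)
      + ST K s) / (s - 1)"

definition PE :: "nat \<Rightarrow> (complex \<Rightarrow> complex) \<Rightarrow> bool" where
  "PE K E \<longleftrightarrow> E holomorphic_on {s. Re s > - real K} \<and> (\<forall>s. Re s > 1 \<longrightarrow> E s + 1 / (s - 1) = Dz s)"

lemma PE0: "PE 0 E0"
  unfolding PE_def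
proof (intro conjI allI impI)
  show "E0 holomorphic_on {s. Re s > - real 0}" using E0_holo by simp
  fix s :: complex assume s: "Re s > 1"
  then have s1: "s \<noteq> 1" by auto
  have "ST 1 s = -1 - (1 - s) * Dz s" using ST_identity[OF s, of 1] by simp
  then show "E0 s + 1 / (s - 1) = Dz s" using s1
    by (simp add: E0_def field_simps)
qed

lemma binom_shift:
  fixes s :: complex
  assumes "j \<ge> 2" "s + of_nat j - 2 \<noteq> 0"
  shows "((1 - s) gchoose j) / (s + of_nat j - 2) = - ((1 - s) gchoose (j - 1)) / of_nat j"
proof -
  obtain k where k: "j = Suc k" using assms by (cases j) auto
  have "(1 - s) * ((1 - s) gchoose k) = of_nat k * ((1 - s) gchoose k) + of_nat (Suc k) * ((1 - s) gchoose (Suc k))"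
    by (rule gbinomial_mult_1)
  then have "of_nat (Suc k) * ((1 - s) gchoose (Suc k)) = - (s + of_nat (Suc k) - 2) * ((1 - s) gchoose k)"
    by (simp add: algebra_simps)
  then show ?thesis using assms k by (simp add: field_simps del: of_nat_Suc)
qed

lemma GE_eq:
  assumes K: "K \<ge> 1" and s: "Re s > 1" and E: "\<And>w. Re w > 1 \<Longrightarrow> E w + 1 / (w - 1) = Dz w"
  shows "GE K E s = Dz s"
proof -
  have s1: "s - 1 \<noteq> 0" using s by auto
  have j: "((1 - s) gchoose j) * E (s + of_nat j - 1) - ((1 - s) gchoose (j - 1)) / of_nat j
      = ((1 - s) gchoose j) * Dz (s + of_nat j - 1)" if "j \<in> {2..K}" for j
  proof -
    have j2: "j \<ge> 2" using that by auto
    have nz: "s + of_nat j - 2 \<noteq> 0"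
    proof
      assume "s + of_nat j - 2 = 0"
      then have "Re (s + of_nat j - 2) = 0" by simp
      then show False using s j2 by simp
    qed
    have "Re (s + of_nat j - 1) > 1" using s j2 by simp
    from E[OF this] have "Dz (s + of_nat j - 1) = E (s + of_nat j - 1) + 1 / (s + of_nat j - 2)"
      by (simp add: algebra_simps)
    then have "((1 - s) gchoose j) * Dz (s + of_nat j - 1) = ((1 - s) gchoose j) * E (s + of_nat j - 1) + ((1 - s) gchoose j) / (s + of_nat j - 2)"
      by (simp add: algebra_simps)
    also have "((1 - s) gchoose j) / (s + of_nat j - 2) = - ((1 - s) gchoose (j - 1)) / of_nat j"
      by (rule binom_shift[OF j2 nz])
    finally show ?thesis by simp
  qed
  have split: "(\<Sum>j\<in>{1..K}. ((1 - s) gchoose j) * Dz (s + of_nat j - 1)) = (1 - s) * Dz s + (\<Sum>j\<in>{2..K}. ((1 - s) gchoose j) * Dz (s + of_nat j - 1))"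
  proof -
    have "{1..K} = insert 1 {2..K}" using K by auto
    then show ?thesis by simp
  qed
  have sj: "(\<Sum>j\<in>{2..K}. ((1 - s) gchoose j) * E (s + of_nat j - 1) - ((1 - s) gchoose (j - 1)) / of_nat j)
     = (\<Sum>j\<in>{2..K}. ((1 - s) gchoose j) * Dz (s + of_nat j - 1))"
    by (rule sum.cong[OF refl]) (rule j)
  have "GE K E s = (1 + (\<Sum>j\<in>{2..K}. ((1 - s) gchoose j) * Dz (s + of_nat j - 1)) + ST K s) / (s - 1)"
    unfolding GE_def sj ..
  also have "\<dots> = Dz s" unfolding ST_identity[OF s] split using s1 by (simp add: field_simps)
  finally show ?thesis .
qed

lemma GE_holo:
  assumes hE: "E holomorphic_on {s. Re s > - real K}"
  shows "(\<lambda>s. GE (K + 2) E s - 1 / (s - 1)) holomorphic_on {s. Re s > - real K - 1} - {1}"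
proof -
  have st: "ST (K + 2) holomorphic_on {s. Re s > - real K - 1} - {1}"
    by (rule holomorphic_on_subset[OF ST_holo]) auto
  have ej: "(\<lambda>s. E (s + of_nat j - 1)) holomorphic_on {s. Re s > - real K - 1} - {1}" if "j \<in> {2..K+2}" for j
  proof -
    have "(E \<circ> (\<lambda>s. s + of_nat j - 1)) holomorphic_on {s. Re s > - real K - 1} - {1}"
    proof (rule holomorphic_on_compose_gen[OF _ hE])
      show "(\<lambda>s. s + of_nat j - 1) holomorphic_on {s. Re s > - real K - 1} - {1}" by (intro holomorphic_intros)
      show "(\<lambda>s. s + of_nat j - 1) ` ({s. Re s > - real K - 1} - {1}) \<subseteq> {s. Re s > - real K}"
        using that by auto
    qed
    then show ?thesis by (simp add: o_def)
  qed
  show ?thesis unfolding GE_def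
    by (intro holomorphic_intros st ej) auto
qed

lemma PE_step:
  assumes P: "PE K E"
  shows "\<exists>E'. PE (Suc K) E'"
proof -
  have hE: "E holomorphic_on {s. Re s > - real K}" and EDz: "\<And>s. Re s > 1 \<Longrightarrow> E s + 1 / (s - 1) = Dz s"
    using P by (auto simp: PE_def)
  define h where "h s = GE (K + 2) E s - 1 / (s - 1)" for s
  have hh: "h holomorphic_on {s. Re s > - real K - 1} - {1}" unfolding h_def[abs_def] by (rule GE_holo[OF hE])
  have agree: "h s = E s" if s: "s \<in> {s. Re s > - real K} - {1}" for s
  proof (rule analytic_continuation_open[where s = "{s. Re s > 1}" and s' = "{s. Re s > - real K} - {1}" and f = h and g = E])
    show "open {s::complex. Re s > 1}" by (simp add: open_halfspace_Re_gt)
    show "open ({s. Re s > - real K} - {1})" by (intro open_Diff) (auto simp: open_halfspace_Re_gt)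
    show "{s::complex. Re s > 1} \<noteq> {}" by (auto intro: exI[of _ 2])
    show "connected ({s. Re s > - real K} - {1})" by (rule connected_Re_gt_minus1)
    show "{s::complex. Re s > 1} \<subseteq> {s. Re s > - real K} - {1}" by auto
    show "h holomorphic_on {s. Re s > - real K} - {1}" by (rule holomorphic_on_subset[OF hh]) auto
    show "E holomorphic_on {s. Re s > - real K} - {1}" by (rule holomorphic_on_subset[OF hE]) auto
    fix z assume z: "z \<in> {s::complex. Re s > 1}"
    then have "GE (K + 2) E z = Dz z" by (intro GE_eq EDz) auto
    then show "h z = E z" using EDz[of z] z by (simp add: h_def algebra_simps)
  qed (use s in auto)
  define E' where "E' s = (if Re s > - real K + 1/2 then E s else h s)" for s
  have "E' holomorphic_on {s. Re s > - real (Suc K)}"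
  proof -
    have "\<exists>f'. DERIV E' z :> f'" if z: "z \<in> {s. Re s > - real (Suc K)}" for z
    proof (cases "Re z > - real K + 1/2")
      case True
      define A where "A = {s::complex. Re s > - real K + 1/2}"
      have oA: "open A" by (simp add: A_def open_halfspace_Re_gt)
      have "E holomorphic_on A" by (rule holomorphic_on_subset[OF hE]) (auto simp: A_def)
      then obtain f' where "DERIV E z :> f'" using oA True by (auto simp: A_def holomorphic_on_open)
      then have "DERIV E' z :> f'"
        by (rule has_field_derivative_transform_within_open[OF _ oA]) (use True in \<open>auto simp: A_def E'_def\<close>)
      then show ?thesis by blast
    next
      case False
      define A where "A = {s::complex. Re s > - real K - 1} \<inter> {s. Re s < - real K + 3/4}"
      have oA: "open A" by (simp add: A_def open_halfspace_Re_gt open_halfspace_Re_lt open_Int)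
      have zA: "z \<in> A" using z False by (auto simp: A_def)
      have "h holomorphic_on A" by (rule holomorphic_on_subset[OF hh]) (auto simp: A_def)
      then obtain f' where "DERIV h z :> f'" using oA zA by (auto simp: holomorphic_on_open)
      moreover have "h x = E' x" if "x \<in> A" for x
      proof (cases "Re x > - real K + 1/2")
        case True
        then have "x \<in> {s. Re s > - real K} - {1}" using that by (auto simp: A_def)
        then show ?thesis using True agree by (auto simp: E'_def)
      qed (auto simp: E'_def)
      ultimately have "DERIV E' z :> f'"
        by (rule has_field_derivative_transform_within_open[OF _ oA zA])
      then show ?thesis by blast
    qed
    then show ?thesis by (simp add: holomorphic_on_open open_halfspace_Re_gt)
  qed
  moreover have "E' s + 1 / (s - 1) = Dz s" if "Re s > 1" for s
    using that EDz[OF that] by (simp add: E'_def)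
  ultimately show ?thesis unfolding PE_def by blast
qed

lemma PE_ex: "\<exists>E. PE K E"
proof (induction K)
  case 0 then show ?case using PE0 by blast
next
  case (Suc K) then show ?case using PE_step by blast
qed

lemma PE_unique:
  assumes "PE K E1" "PE K' E2" "Re s > - real (min K K')"
  shows "E1 s = E2 s"
proof (rule analytic_continuation_open[where s = "{s. Re s > 1}" and s' = "{s. Re s > - real (min K K')}" and f = E1 and g = E2])
  show "open {s::complex. Re s > 1}" by (simp add: open_halfspace_Re_gt)
  show "open {s::complex. Re s > - real (min K K')}" by (simp add: open_halfspace_Re_gt)
  show "{s::complex. Re s > 1} \<noteq> {}" by (auto intro: exI[of _ 2])
  show "connected {s::complex. Re s > - real (min K K')}" by (rule convex_connected_Re_gt)
  show "{s::complex. Re s > 1} \<subseteq> {s. Re s > - real (min K K')}" by auto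
  show "E1 holomorphic_on {s. Re s > - real (min K K')}"
    using assms(1) by (auto simp: PE_def elim!: holomorphic_on_subset)
  show "E2 holomorphic_on {s. Re s > - real (min K K')}"
    using assms(2) by (auto simp: PE_def elim!: holomorphic_on_subset)
  fix z :: complex assume "z \<in> {s. Re s > 1}"
  then show "E1 z = E2 z" using assms(1,2) unfolding PE_def
    by (metis (no_types, lifting) add_diff_cancel_right' mem_Collect_eq)
qed (use assms in auto)

definition EK :: "nat \<Rightarrow> complex \<Rightarrow> complex" where "EK K = (SOME E. PE K E)"

lemma PE_EK: "PE K (EK K)"
  unfolding EK_def using PE_ex by (rule someI_ex)

definition Ent :: "complex \<Rightarrow> complex" where
  "Ent s = EK (nat \<lceil>- Re s\<rceil> + 1) s"

lemma Ent_holo: "Ent holomorphic_on UNIV"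
proof -
  have "\<exists>f'. DERIV Ent z :> f'" for z
  proof -
    define K0 where "K0 = nat \<lceil>- Re z\<rceil> + 1"
    define A where "A = {s::complex. Re s > - real K0}"
    have oA: "open A" by (simp add: A_def open_halfspace_Re_gt)
    have zA: "z \<in> A" unfolding A_def K0_def by simp linarith
    have "EK K0 holomorphic_on A" using PE_EK[of K0] by (simp add: PE_def A_def)
    then obtain f' where "DERIV (EK K0) z :> f'" using oA zA by (auto simp: holomorphic_on_open)
    moreover have "EK K0 x = Ent x" if "x \<in> A" for x
    proof -
      have "Re x > - real (nat \<lceil>- Re x\<rceil> + 1)" by simp linarith
      then have "Re x > - real (min K0 (nat \<lceil>- Re x\<rceil> + 1))" using that by (auto simp: A_def min_def)
      then show ?thesis unfolding Ent_def by (rule PE_unique[OF PE_EK PE_EK])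
    qed
    ultimately have "DERIV Ent z :> f'" by (rule has_field_derivative_transform_within_open[OF _ oA zA])
    then show ?thesis by blast
  qed
  then show ?thesis by (simp add: holomorphic_on_open)
qed

lemma Ent_Dz: "Re s > 1 \<Longrightarrow> Ent s + 1 / (s - 1) = Dz s"
  using PE_EK[of "nat \<lceil>- Re s\<rceil> + 1"] by (simp add: PE_def Ent_def)

lemma zeta_exists: "\<exists>f. f holomorphic_on (- {1}) \<and>
       (\<forall>s. 1 < Re s \<longrightarrow> f s = (\<Sum>n. 1 / (of_nat (Suc n)) powr s))"
proof (intro exI conjI allI impI)
  show "(\<lambda>s. Ent s + 1 / (s - 1)) holomorphic_on (- {1})"
    by (intro holomorphic_intros holomorphic_on_subset[OF Ent_holo]) auto
  fix s :: complex assume "1 < Re s"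
  then show "Ent s + 1 / (s - 1) = (\<Sum>n. 1 / (of_nat (Suc n)) powr s)" using Ent_Dz Dz_def by simp
qed

lemma zeta_props: "riemann_zeta holomorphic_on (- {1})" "\<And>s. 1 < Re s \<Longrightarrow> riemann_zeta s = Dz s"
  using someI_ex[OF zeta_exists] unfolding riemann_zeta_def[symmetric] Dz_def by auto

lemma zeta_ST1:
  assumes "Re s > 0" "s \<noteq> 1"
  shows "riemann_zeta s = (1 + ST 1 s) / (s - 1)"
proof (rule analytic_continuation_open[where s = "{s. Re s > 1}" and s' = "{s. Re s > 0} - {1}" and f = riemann_zeta and g = "\<lambda>s. (1 + ST 1 s) / (s - 1)"])
  show "open {s::complex. Re s > 1}" by (simp add: open_halfspace_Re_gt)
  show "open ({s::complex. Re s > 0} - {1})" by (intro open_Diff) (auto simp: open_halfspace_Re_gt)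
  show "{s::complex. Re s > 1} \<noteq> {}" by (auto intro: exI[of _ 2])
  show "connected ({s::complex. Re s > 0} - {1})" by (rule connected_Re_gt_minus1)
  show "{s::complex. Re s > 1} \<subseteq> {s. Re s > 0} - {1}" by auto
  show "riemann_zeta holomorphic_on {s. Re s > 0} - {1}" by (rule holomorphic_on_subset[OF zeta_props(1)]) auto
  have h: "ST 1 holomorphic_on {s. Re s > 0}" using ST_holo[of 1] by simp
  show "(\<lambda>s. (1 + ST 1 s) / (s - 1)) holomorphic_on {s. Re s > 0} - {1}"
    by (intro holomorphic_intros holomorphic_on_subset[OF h]) auto
  fix z :: complex assume z: "z \<in> {s. Re s > 1}"
  then have "ST 1 z = -1 - (1 - z) * Dz z" using ST_identity[of z 1] by simp
  moreover have "z \<noteq> 1" using z by auto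
  ultimately show "riemann_zeta z = (1 + ST 1 z) / (z - 1)" using z zeta_props(2)[of z]
    by (simp add: field_simps)
qed (use assms in auto)

lemma T1_bound: "norm (TT 1 n s) \<le> (norm (1 - s) + 1)^2 * 2 powr (\<bar>1 - Re s\<bar> + 2) * real (Suc n) powr (- Re s - 1)"
  using T_bound[of 1 n s] by (simp add: add.commute power2_eq_square)

lemma T1_summable:
  assumes "Re s > 0" shows "summable (\<lambda>n. TT 1 n s)"
proof (rule summable_norm_cancel, rule summable_comparison_test[OF _ summable_mult[OF summable_powr_Suc]])
  show "\<exists>N. \<forall>n\<ge>N. norm (norm (TT 1 n s)) \<le> (norm (1 - s) + 1)^2 * 2 powr (\<bar>1 - Re s\<bar> + 2) * real (Suc n) powr (- Re s - 1)"
    using T1_bound by auto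
  show "- Re s - 1 < -1" using assms by simp
qed

lemma zeta_trunc:
  assumes s: "Re s > 0" "s \<noteq> 1"
  shows "riemann_zeta s = (\<Sum>n<N. of_nat (Suc n) powr (- s)) + of_nat (Suc N) powr (1 - s) / (s - 1)
           + (\<Sum>n. TT 1 (n + N) s) / (s - 1)"
proof -
  define g where "g n = (of_nat (Suc n) :: complex) powr (1 - s)" for n
  have Talt: "TT 1 n s = (g (Suc n) - g n) - (1 - s) * of_nat (Suc n) powr (- s)" for n
    using T_alt[of 1 n s] by (simp add: g_def)
  have fin: "(\<Sum>n<N. TT 1 n s) = g N - 1 - (1 - s) * (\<Sum>n<N. of_nat (Suc n) powr (- s))"
  proof -
    have "(\<Sum>n<N. TT 1 n s) = (\<Sum>n<N. g (Suc n) - g n) - (\<Sum>n<N. (1 - s) * of_nat (Suc n) powr (- s))"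
      unfolding Talt by (simp add: sum_subtractf)
    also have "(\<Sum>n<N. g (Suc n) - g n) = g N - g 0" by (rule sum_lessThan_telescope)
    also have "g 0 = 1" by (simp add: g_def)
    finally show ?thesis by (simp add: sum_distrib_left)
  qed
  have "ST 1 s = (\<Sum>n. TT 1 (n + N) s) + (\<Sum>n<N. TT 1 n s)"
    unfolding ST_def by (rule suminf_split_initial_segment[OF T1_summable[OF s(1)]])
  define S where "S = (\<Sum>n<N. of_nat (Suc n) powr (- s) :: complex)"
  define R where "R = (\<Sum>n. TT 1 (n + N) s)"
  have "1 + ST 1 s = g N + (s - 1) * S + R"
    unfolding fin S_def R_def \<open>ST 1 s = _\<close> by (simp add: algebra_simps)
  moreover have nz: "s - 1 \<noteq> 0" using s by simp
  ultimately have "riemann_zeta s = (g N + (s - 1) * S + R) / (s - 1)" unfolding zeta_ST1[OF s] by simp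
  also have "\<dots> = S + g N / (s - 1) + R / (s - 1)" using nz by (simp add: add_divide_distrib)
  finally show ?thesis by (simp add: S_def R_def g_def)
qed

lemma harm_le_ln: "N \<ge> 1 \<Longrightarrow> (harm N :: real) \<le> 1 + ln (real N)"
proof -
  assume N: "N \<ge> 1"
  then obtain M where M: "N = Suc M" by (cases N) auto
  have "harm (Suc M) - ln (real (Suc M)) \<le> harm (Suc 0) - ln (real (Suc 0))"
    using decseq_harm_diff_ln[unfolded decseq_def, rule_format, of 0 M] by simp
  then show ?thesis using M by (simp add: harm_expand)
qed

lemma sqrt_tele_ineq:
  fixes a b :: real
  assumes a: "0 < a" and ab: "a \<le> b" and e: "b^2 = a^2 + 1"
  shows "1 / (b^2 * b) \<le> 2 * (1 / a - 1 / b)"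
proof -
  have b: "0 < b" using a ab by simp
  have "(b - a) * (a + b) = 1" using e by (simp add: algebra_simps power2_eq_square)
  then have ba: "b - a = 1 / (a + b)" using a b by (simp add: field_simps)
  have "2 * (1 / a - 1 / b) = 2 * ((b - a) / (a * b))" using a b by (simp add: field_simps)
  also have "\<dots> = 2 / (a * b * (a + b))" unfolding ba using a b by (simp add: field_simps)
  finally have r: "2 * (1 / a - 1 / b) = 2 / (a * b * (a + b))" .
  have "a * b * (a + b) \<le> b * b * (2 * b)"
    using a b ab by (intro mult_mono) auto
  then have "2 / (b * b * (2 * b)) \<le> 2 / (a * b * (a + b))" using a b
    by (intro frac_le) auto
  moreover have "1 / (b^2 * b) = 2 / (b * b * (2 * b))" using b by (simp add: power2_eq_square)
  ultimately have "1 / (b^2 * b) \<le> 2 / (a * b * (a + b))" by linarith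
  then show ?thesis using r by simp
qed

lemma powr_32_tele:
  assumes "m \<ge> (2::real)"
  shows "m powr (-3/2) \<le> 2 * (1 / sqrt (m - 1) - 1 / sqrt m)"
proof -
  have "m powr (-3/2) = 1 / ((sqrt m)^2 * sqrt m)"
  proof -
    have "m powr (-3/2) = inverse (m powr (3/2))" by (simp add: powr_minus[symmetric])
    also have "m powr (3/2) = m powr 1 * m powr (1/2)"
    proof -
      have e: "(3/2::real) = 1 + 1/2" by simp
      show ?thesis by (subst e, subst powr_add) (rule refl)
    qed
    also have "\<dots> = (sqrt m)^2 * sqrt m" using assms by (simp add: powr_half_sqrt real_sqrt_pow2)
    finally show ?thesis by (simp only: inverse_eq_divide)
  qed
  also have "\<dots> \<le> 2 * (1 / sqrt (m - 1) - 1 / sqrt m)"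
    using assms by (intro sqrt_tele_ineq) auto
  finally show ?thesis .
qed

lemma tail_bound:
  assumes N: "N \<ge> 1" and sig: "\<sigma> \<ge> 1/2"
  shows "summable (\<lambda>n. real (n + N + 1) powr (- \<sigma> - 1))"
    and "(\<Sum>n. real (n + N + 1) powr (- \<sigma> - 1)) \<le> 2 * real (N + 1) powr (1/2 - \<sigma>) / sqrt (real N)"
proof -
  define c where "c = real (N + 1) powr (1/2 - \<sigma>)"
  have c: "c \<ge> 0" by (simp add: c_def)
  define f where "f n = 1 / sqrt (real (n + N))" for n
  have flim: "f \<longlonglongrightarrow> 0"
  proof -
    have "filterlim (\<lambda>n. real (n + N)) at_top sequentially"
      by (intro filterlim_compose[OF filterlim_real_sequentially]) (rule filterlim_add_const_nat_at_top)
    then have "filterlim (\<lambda>n. sqrt (real (n + N))) at_top sequentially"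
      by (rule filterlim_compose[OF sqrt_at_top])
    then show ?thesis unfolding f_def by (intro tendsto_divide_0[OF tendsto_const] filterlim_at_top_imp_at_infinity)
  qed
  have tel: "(\<lambda>n. c * (2 * (f n - f (Suc n)))) sums (c * (2 * (f 0 - 0)))"
    by (intro sums_mult telescope_sums'[OF flim])
  have le: "real (n + N + 1) powr (- \<sigma> - 1) \<le> c * (2 * (f n - f (Suc n)))" for n
  proof -
    have m1: "real (n + N + 1) \<ge> real (N + 1)" by simp
    have e: "- \<sigma> - 1 = (-3/2) + (1/2 - \<sigma>)" by simp
    have "real (n + N + 1) powr (- \<sigma> - 1) = real (n + N + 1) powr (-3/2) * real (n + N + 1) powr (1/2 - \<sigma>)"
      by (subst e, subst powr_add) (rule refl)
    also have "\<dots> \<le> real (n + N + 1) powr (-3/2) * c"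
      unfolding c_def using sig by (intro mult_left_mono powr_mono2') auto
    also have "real (n + N + 1) powr (-3/2) \<le> 2 * (f n - f (Suc n))"
    proof -
      have "real (n + N + 1) powr (-3/2) \<le> 2 * (1 / sqrt (real (n + N + 1) - 1) - 1 / sqrt (real (n + N + 1)))"
        using N by (intro powr_32_tele) auto
      then show ?thesis by (simp add: f_def)
    qed
    then have "real (n + N + 1) powr (-3/2) * c \<le> 2 * (f n - f (Suc n)) * c" using c by (rule mult_right_mono)
    finally show ?thesis by (simp add: algebra_simps)
  qed
  show sm: "summable (\<lambda>n. real (n + N + 1) powr (- \<sigma> - 1))"
    by (rule summable_comparison_test[OF _ sums_summable[OF tel]]) (use le in auto)
  have "(\<Sum>n. real (n + N + 1) powr (- \<sigma> - 1)) \<le> c * (2 * (f 0 - 0))"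
    using suminf_le[OF le sm sums_summable[OF tel]] sums_unique[OF tel] by simp
  then show "(\<Sum>n. real (n + N + 1) powr (- \<sigma> - 1)) \<le> 2 * real (N + 1) powr (1/2 - \<sigma>) / sqrt (real N)"
    by (simp add: c_def f_def mult.commute)
qed

lemma ln_ge_2: "t \<ge> 16 \<Longrightarrow> ln t \<ge> (2::real)"
proof -
  assume t: "t \<ge> 16"
  have "exp 2 = exp (1::real) * exp 1" by (simp add: exp_add[symmetric])
  also have "\<dots> \<le> 3 * 3" using exp_le by (intro mult_mono) auto
  finally have "exp 2 \<le> t" using t by simp
  then show ?thesis using t by (simp add: ln_ge_iff)
qed

lemma zeta_near_line:
  assumes t: "t \<ge> 16" and s: "cmod (s - Complex 1 t) \<le> 1 / ln t"
  shows "cmod (riemann_zeta s) \<le> 400 * ln t"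
proof -
  define r where "r = 1 / ln t"
  have lt: "ln t \<ge> 2" using ln_ge_2[OF t] .
  have r0: "r > 0" and r2: "r \<le> 1/2" using lt by (auto simp: r_def field_simps)
  have sr: "cmod (s - Complex 1 t) \<le> r" using s by (simp add: r_def)
  have reb: "\<bar>Re s - 1\<bar> \<le> r" using abs_Re_le_cmod[of "s - Complex 1 t"] sr by simp
  have imb: "\<bar>Im s - t\<bar> \<le> r" using abs_Im_le_cmod[of "s - Complex 1 t"] sr by simp
  define \<sigma> where "\<sigma> = Re s"
  have sig1: "\<sigma> \<ge> 1/2" "\<sigma> \<le> 3/2" "1 - \<sigma> \<le> r" "\<bar>1 - \<sigma>\<bar> \<le> 1"
    using reb r2 by (auto simp: \<sigma>_def abs_le_iff)
  have key: "x powr (1 - \<sigma>) \<le> exp 1" if x: "1 \<le> x" "x \<le> t" for x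
  proof -
    have "x powr (1 - \<sigma>) \<le> x powr r" using x sig1 by (intro powr_mono) auto
    also have "\<dots> \<le> t powr r" using x r0 by (intro powr_mono2) auto
    also have "t powr r = exp 1" using t lt by (simp add: powr_def r_def)
    finally show ?thesis .
  qed
  have e3: "exp 1 \<le> (3::real)" by (rule exp_le)
  define N where "N = nat \<lfloor>t\<rfloor> - 1"
  have fl: "real_of_int \<lfloor>t\<rfloor> \<le> t" "t < real_of_int \<lfloor>t\<rfloor> + 1" by linarith+
  have fl16: "\<lfloor>t\<rfloor> \<ge> 16" using t by linarith
  have N1: "real (N + 1) = real_of_int \<lfloor>t\<rfloor>" using fl16 by (simp add: N_def of_nat_diff)
  have Nt: "real (N + 1) \<le> t" using N1 fl by simp
  have Nge: "real N \<ge> t - 2" using N1 fl by linarith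
  have Nge1: "N \<ge> 1" using Nge t by simp
  have s_re: "Re s > 0" using sig1 by (simp add: \<sigma>_def)
  have ims: "\<bar>Im s\<bar> \<ge> t - 1/2" using imb r2 by (auto simp: abs_le_iff)
  have s1n: "cmod (s - 1) \<ge> t - 1/2"
    using abs_Im_le_cmod[of "s - 1"] ims by simp
  have s1: "s \<noteq> 1" using s1n t by auto
  have s1u: "cmod (1 - s) \<le> t + 1"
  proof -
    have "cmod (1 - s) \<le> cmod (Complex 1 t - s) + cmod (1 - Complex 1 t)"
      using norm_triangle_ineq[of "Complex 1 t - s" "1 - Complex 1 t"] by simp
    also have "cmod (Complex 1 t - s) \<le> r" using sr by (simp add: norm_minus_commute)
    also have "cmod (1 - Complex 1 t) = \<bar>t\<bar>" by (simp add: cmod_def)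
    finally show ?thesis using r2 t by simp
  qed
  have term1: "cmod (\<Sum>n<N. of_nat (Suc n) powr (- s)) \<le> exp 1 * (1 + ln t)"
  proof -
    have "cmod (\<Sum>n<N. of_nat (Suc n) powr (- s)) \<le> (\<Sum>n<N. cmod (of_nat (Suc n) powr (- s)))"
      by (rule norm_sum)
    also have "\<dots> \<le> (\<Sum>n<N. exp 1 * inverse (real (Suc n)))"
    proof (rule sum_mono)
      fix n assume n: "n \<in> {..<N}"
      have "cmod (of_nat (Suc n) powr (- s)) = real (Suc n) powr (- \<sigma>)"
        using norm_powr_real_powr[of "of_nat (Suc n)" "- s"] by (simp add: \<sigma>_def)
      also have "\<dots> = real (Suc n) powr (1 - \<sigma>) * inverse (real (Suc n))"
      proof -
        have e: "1 - \<sigma> = 1 + (- \<sigma>)" by simp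
        have "real (Suc n) powr (1 - \<sigma>) = real (Suc n) powr 1 * real (Suc n) powr (- \<sigma>)"
          by (subst e, subst powr_add) (rule refl)
        then show ?thesis by simp
      qed
      also have "\<dots> \<le> exp 1 * inverse (real (Suc n))"
        using n Nt by (intro mult_right_mono key) auto
      finally show "cmod (of_nat (Suc n) powr (- s)) \<le> exp 1 * inverse (real (Suc n))" .
    qed
    also have "\<dots> = exp 1 * harm N" by (simp add: harm_altdef sum_distrib_left)
    also have "\<dots> \<le> exp 1 * (1 + ln (real N))" using harm_le_ln[OF Nge1] by simp
    also have "ln (real N) \<le> ln t" using Nt Nge1 by simp
    finally show ?thesis by simp
  qed
  have term2: "cmod (of_nat (Suc N) powr (1 - s) / (s - 1)) \<le> exp 1"
  proof -
    have "cmod (of_nat (Suc N) powr (1 - s) :: complex) = real (Suc N) powr (1 - \<sigma>)"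
      using norm_powr_real_powr[of "of_nat (Suc N)" "1 - s"] by (simp add: \<sigma>_def)
    also have "\<dots> \<le> exp 1" using Nt by (intro key) auto
    finally have a: "cmod (of_nat (Suc N) powr (1 - s) :: complex) \<le> exp 1" .
    have b: "cmod (s - 1) \<ge> 1" using s1n t by simp
    have "cmod (of_nat (Suc N) powr (1 - s) / (s - 1)) = cmod (of_nat (Suc N) powr (1 - s) :: complex) / cmod (s - 1)"
      by (simp add: norm_divide)
    also have "\<dots> \<le> exp 1 / 1" using a b by (intro frac_le) auto
    finally show ?thesis by simp
  qed
  define C where "C = (cmod (1 - s) + 1)^2 * 2 powr (\<bar>1 - Re s\<bar> + 2)"
  have C0: "C \<ge> 0" by (simp add: C_def)
  have Tb: "cmod (TT 1 (n + N) s) \<le> C * real (n + N + 1) powr (- \<sigma> - 1)" for n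
    using T1_bound[of "n + N" s] by (simp add: C_def \<sigma>_def add.commute)
  have tb: "summable (\<lambda>n. real (n + N + 1) powr (- \<sigma> - 1))"
    "(\<Sum>n. real (n + N + 1) powr (- \<sigma> - 1)) \<le> 2 * real (N + 1) powr (1/2 - \<sigma>) / sqrt (real N)"
    using tail_bound[OF Nge1 sig1(1)] by auto
  have smC: "summable (\<lambda>n. C * real (n + N + 1) powr (- \<sigma> - 1))" using tb(1) by (rule summable_mult)
  have smT: "summable (\<lambda>n. cmod (TT 1 (n + N) s))"
    by (rule summable_comparison_test[OF _ smC]) (use Tb in auto)
  have tail2: "2 * real (N + 1) powr (1/2 - \<sigma>) / sqrt (real N) \<le> 2 * exp 1 / real N"
  proof -
    have e: "1/2 - \<sigma> = (1 - \<sigma>) + (-(1/2))" by simp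
    have "real (N + 1) powr (1/2 - \<sigma>) = real (N + 1) powr (1 - \<sigma>) * real (N + 1) powr (-(1/2))"
      by (subst e, subst powr_add) (rule refl)
    also have "\<dots> \<le> exp 1 * real (N + 1) powr (-(1/2))" using Nt by (intro mult_right_mono key) auto
    also have "real (N + 1) powr (-(1/2)) = 1 / sqrt (real (N + 1))"
    proof -
      have "real (N + 1) powr (-(1/2)) = inverse (real (N + 1) powr (1/2))" by (rule powr_minus)
      also have "real (N + 1) powr (1/2) = sqrt (real (N + 1))" by (rule powr_half_sqrt) simp
      finally show ?thesis by (simp only: inverse_eq_divide)
    qed
    finally have a: "real (N + 1) powr (1/2 - \<sigma>) \<le> exp 1 / sqrt (real (N + 1))" by simp
    have b: "sqrt (real (N + 1)) * sqrt (real N) \<ge> real N"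
    proof -
      have "sqrt (real N) * sqrt (real N) \<le> sqrt (real (N + 1)) * sqrt (real N)"
        by (intro mult_right_mono) auto
      then show ?thesis by simp
    qed
    have Np: "real N > 0" using Nge1 by simp
    have "2 * real (N + 1) powr (1/2 - \<sigma>) / sqrt (real N) \<le> 2 * (exp 1 / sqrt (real (N + 1))) / sqrt (real N)"
      using a Np by (intro divide_right_mono mult_left_mono) auto
    also have "\<dots> = 2 * exp 1 / (sqrt (real (N + 1)) * sqrt (real N))" by simp
    also have "\<dots> \<le> 2 * exp 1 / real N" using b Np by (intro divide_left_mono) auto
    finally show ?thesis .
  qed
  have sumT: "(\<Sum>n. cmod (TT 1 (n + N) s)) \<le> C * (2 * exp 1 / real N)"
  proof -
    have "(\<Sum>n. cmod (TT 1 (n + N) s)) \<le> (\<Sum>n. C * real (n + N + 1) powr (- \<sigma> - 1))"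
      by (rule suminf_le[OF Tb smT smC])
    also have "\<dots> = C * (\<Sum>n. real (n + N + 1) powr (- \<sigma> - 1))" using tb(1) by (rule suminf_mult)
    also have "\<dots> \<le> C * (2 * exp 1 / real N)" using tb(2) tail2 C0 by (intro mult_left_mono) auto
    finally show ?thesis .
  qed
  have Cb: "C \<le> 8 * (cmod (s - 1) + 1)^2"
  proof -
    have "2 powr (\<bar>1 - Re s\<bar> + 2) \<le> 2 powr 3" using sig1 by (intro powr_mono) (auto simp: \<sigma>_def)
    then have "C \<le> (cmod (1 - s) + 1)^2 * 8" unfolding C_def by (intro mult_left_mono) auto
    then show ?thesis by (simp add: norm_minus_commute)
  qed
  have term3: "cmod ((\<Sum>n. TT 1 (n + N) s) / (s - 1)) \<le> 128 * exp 1"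
  proof -
    define x where "x = cmod (s - 1)"
    have x1: "x \<ge> 1" using s1n t by (simp add: x_def)
    have xt: "x \<le> t + 1" using s1u by (simp add: x_def norm_minus_commute)
    have "cmod ((\<Sum>n. TT 1 (n + N) s) / (s - 1)) = cmod (\<Sum>n. TT 1 (n + N) s) / x"
      by (simp add: norm_divide x_def)
    also have "\<dots> \<le> (C * (2 * exp 1 / real N)) / x"
      using summable_norm[OF smT] sumT x1 by (intro divide_right_mono) auto
    also have "\<dots> \<le> (8 * (x + 1)^2 * (2 * exp 1 / real N)) / x"
      using Cb x1 by (intro divide_right_mono mult_right_mono) (auto simp: x_def)
    also have "\<dots> = 16 * exp 1 * ((x + 1)^2 / x) / real N" by (simp add: field_simps)
    also have "(x + 1)^2 / x \<le> 4 * x"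
    proof -
      have "(x + 1)^2 \<le> (2 * x)^2" using x1 by (intro power_mono) auto
      then show ?thesis using x1 by (simp add: field_simps power2_eq_square)
    qed
    then have "16 * exp 1 * ((x + 1)^2 / x) / real N \<le> 16 * exp 1 * (4 * x) / real N"
      using Nge1 by (intro divide_right_mono mult_left_mono) auto
    also have "\<dots> \<le> 16 * exp 1 * (4 * (2 * real N)) / real N"
      using xt Nge t by (intro divide_right_mono mult_left_mono) auto
    also have "\<dots> = 128 * exp 1" using Nge1 by simp
    finally show ?thesis .
  qed
  have "cmod (riemann_zeta s) \<le> cmod (\<Sum>n<N. of_nat (Suc n) powr (- s)) + cmod (of_nat (Suc N) powr (1 - s) / (s - 1))
           + cmod ((\<Sum>n. TT 1 (n + N) s) / (s - 1))"
    unfolding zeta_trunc[OF s_re s1, of N] by (intro norm_triangle_le add_mono norm_triangle_ineq order_refl)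
  also have "\<dots> \<le> exp 1 * (1 + ln t) + exp 1 + 128 * exp 1"
    using term1 term2 term3 by simp
  also have "\<dots> \<le> 3 * (1 + ln t) + 3 + 128 * 3" using e3 lt by (intro add_mono mult_right_mono) auto
  also have "\<dots> \<le> 400 * ln t" using lt by simp
  finally show ?thesis .
qed

lemma zd_holo: "zeta_deriv m holomorphic_on (- {1})"
  unfolding zeta_deriv_def by (intro holomorphic_higher_deriv zeta_props(1)) auto

lemma zd_Suc: "zeta_deriv (Suc m) = deriv (zeta_deriv m)"
  by (simp add: zeta_deriv_def)

lemma zd_deriv: "z \<noteq> 1 \<Longrightarrow> (zeta_deriv m has_field_derivative zeta_deriv (Suc m) z) (at z within S)"
  unfolding zd_Suc by (rule holomorphic_derivI[OF zd_holo]) auto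

lemma zd_cont_line: "continuous_on {1..} (\<lambda>t. zeta_deriv m (Complex 1 t))"
proof (rule continuous_on_compose2[OF holomorphic_on_imp_continuous_on[OF zd_holo]])
  show "continuous_on {1..} (Complex 1)" by (intro continuous_intros)
  show "Complex 1 ` {1..} \<subseteq> - {1}" by (auto simp: complex_eq_iff)
qed

lemma zd_bound: "\<exists>C. \<forall>t\<ge>16. cmod (zeta_deriv (Suc m) (Complex 1 t)) \<le> C * (ln t)^(m+2)"
proof (intro exI allI impI)
  fix t :: real assume t: "t \<ge> 16"
  have lt: "ln t \<ge> 2" by (rule ln_ge_2[OF t])
  define r where "r = 1 / ln t"
  have r0: "r > 0" "r \<le> 1/2" using lt by (auto simp: r_def field_simps)
  define z where "z = Complex 1 t"
  have sub: "cball z r \<subseteq> - {1}"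
  proof
    fix w assume w: "w \<in> cball z r"
    have "\<bar>Im (z - w)\<bar> \<le> r" using abs_Im_le_cmod[of "z - w"] w by (simp add: dist_norm)
    then have "Im w \<noteq> 0" using r0 t by (auto simp: z_def abs_le_iff)
    then show "w \<in> - {1}" by auto
  qed
  have "cmod ((deriv ^^ Suc m) riemann_zeta z) \<le> fact (Suc m) * (400 * ln t + 1) / r ^ Suc m"
  proof (rule Cauchy_higher_deriv_bound[where y = 0])
    show "riemann_zeta holomorphic_on ball z r"
      using zeta_props(1) sub ball_subset_cball holomorphic_on_subset by blast
    show "continuous_on (cball z r) riemann_zeta"
      using zeta_props(1) sub holomorphic_on_imp_continuous_on holomorphic_on_subset by blast
    fix w assume w: "w \<in> ball z r"
    have "cmod (w - Complex 1 t) \<le> 1 / ln t" using w by (simp add: dist_norm z_def r_def norm_minus_commute)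
    then have "cmod (riemann_zeta w) \<le> 400 * ln t" by (rule zeta_near_line[OF t])
    then show "riemann_zeta w \<in> ball 0 (400 * ln t + 1)" by simp
  qed (use r0 in auto)
  also have "\<dots> = fact (Suc m) * (400 * ln t + 1) * (ln t) ^ Suc m"
    by (simp add: r_def power_one_over)
  also have "\<dots> \<le> fact (Suc m) * (401 * ln t) * (ln t) ^ Suc m"
    using lt by (intro mult_right_mono mult_left_mono) auto
  also have "\<dots> = (fact (Suc m) * 401) * (ln t)^(m+2)" by (simp add: power_Suc)
  finally show "cmod (zeta_deriv (Suc m) (Complex 1 t)) \<le> (fact (Suc m) * 401) * (ln t)^(m+2)"
    by (simp add: zeta_deriv_def z_def)
qed

lemma seg_line:
  assumes "z \<in> closed_segment (Complex 1 a) (Complex 1 b)"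
  shows "Re z = 1" "min a b \<le> Im z" "Im z \<le> max a b"
proof -
  obtain u where u: "0 \<le> u" "u \<le> 1" "z = (1 - u) *\<^sub>R Complex 1 a + u *\<^sub>R Complex 1 b"
    using assms by (auto simp: closed_segment_def)
  show "Re z = 1" unfolding u(3) by (simp add: algebra_simps)
  have im: "Im z = (1 - u) * a + u * b" unfolding u(3) by simp
  have "(1 - u) * a + u * b \<ge> (1 - u) * min a b + u * min a b"
    using u by (intro add_mono mult_left_mono) auto
  then show "min a b \<le> Im z" using im by (simp add: algebra_simps)
  have "(1 - u) * a + u * b \<le> (1 - u) * max a b + u * max a b"
    using u by (intro add_mono mult_left_mono) auto
  then show "Im z \<le> max a b" using im by (simp add: algebra_simps)
qed

lemma zd_lipschitz:
  obtains L where "\<And>T t. T \<ge> 32 \<Longrightarrow> \<bar>t - T\<bar> \<le> 1 \<Longrightarrow>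
     cmod (zeta_deriv m (Complex 1 t) - zeta_deriv m (Complex 1 T)) \<le> L * (ln T)^(m+2) * \<bar>t - T\<bar>"
proof -
  obtain C where C: "\<And>t. t \<ge> 16 \<Longrightarrow> cmod (zeta_deriv (Suc m) (Complex 1 t)) \<le> C * (ln t)^(m+2)"
    using zd_bound by blast
  have C0: "C \<ge> 0"
  proof -
    have "0 \<le> cmod (zeta_deriv (Suc m) (Complex 1 16))" by simp
    also have "\<dots> \<le> C * (ln 16)^(m+2)" by (rule C) simp
    finally have a: "0 \<le> C * (ln 16::real)^(m+2)" .
    have p: "(ln 16::real)^(m+2) > 0" using ln_ge_2[of 16] by simp
    show ?thesis
    proof (rule ccontr)
      assume "\<not> 0 \<le> C"
      then have "C * (ln 16::real)^(m+2) < 0" using p by (intro mult_neg_pos) auto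
      then show False using a by simp
    qed
  qed
  define L where "L = C * 2^(m+2)"
  have "cmod (zeta_deriv m (Complex 1 t) - zeta_deriv m (Complex 1 T)) \<le> L * (ln T)^(m+2) * \<bar>t - T\<bar>"
    if T: "T \<ge> 32" and tT: "\<bar>t - T\<bar> \<le> 1" for T t
  proof -
    have lT: "ln T \<ge> 2" using ln_ge_2[of T] T by simp
    have "cmod (zeta_deriv m (Complex 1 t) - zeta_deriv m (Complex 1 T)) \<le> (C * (2 * ln T)^(m+2)) * cmod (Complex 1 t - Complex 1 T)"
    proof (rule field_differentiable_bound[of "closed_segment (Complex 1 T) (Complex 1 t)"])
      show "convex (closed_segment (Complex 1 T) (Complex 1 t))" by simp
      fix z assume z: "z \<in> closed_segment (Complex 1 T) (Complex 1 t)"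
      note sl = seg_line[OF z]
      have z1: "z \<noteq> 1" using sl T tT by (auto simp: complex_eq_iff min_def abs_le_iff split: if_splits)
      show "(zeta_deriv m has_field_derivative zeta_deriv (Suc m) z) (at z within closed_segment (Complex 1 T) (Complex 1 t))"
        by (rule zd_deriv[OF z1])
      have zeq: "z = Complex 1 (Im z)" using sl by (simp add: complex_eq_iff)
      have u16: "Im z \<ge> 16" and uT: "Im z \<le> T + 1" using sl T tT by (auto simp: min_def max_def abs_le_iff split: if_splits)
      have "cmod (zeta_deriv (Suc m) z) \<le> C * (ln (Im z))^(m+2)" using C[OF u16] zeq by metis
      also have "\<dots> \<le> C * (2 * ln T)^(m+2)"
      proof (intro mult_left_mono power_mono C0)
        have "32 * T \<le> T * T" using T by (intro mult_right_mono) auto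
        then have TT: "T + 1 \<le> T * T" using T by linarith
        have "ln (Im z) \<le> ln (T * T)" using u16 uT T TT by (subst ln_le_cancel_iff) auto
        also have "\<dots> = 2 * ln T" using T by (simp add: ln_mult)
        finally show "ln (Im z) \<le> 2 * ln T" .
        show "0 \<le> ln (Im z)" using u16 by simp
      qed
      finally show "cmod (zeta_deriv (Suc m) z) \<le> C * (2 * ln T)^(m+2)" .
    qed auto
    also have "cmod (Complex 1 t - Complex 1 T) = \<bar>t - T\<bar>" by (simp add: cmod_def)
    also have "C * (2 * ln T)^(m+2) = L * (ln T)^(m+2)" by (simp add: L_def power_mult_distrib)
    finally show ?thesis .
  qed
  then show ?thesis using that by blast
qed

lemma Delta_bounds: "T \<ge> 32 \<Longrightarrow> 0 < Delta m T \<and> Delta m T \<le> 1"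
proof -
  assume T: "T \<ge> 32"
  have l: "ln T \<ge> 2" using ln_ge_2[of T] T by simp
  have "1 \<le> (ln T)^(m+2)" using l by (intro one_le_power) auto
  then show ?thesis using l by (simp add: Delta_def)
qed

lemma int_cont:
  assumes T: "T \<ge> 32"
  shows "(\<lambda>t. norm (zeta_deriv m (Complex 1 t)) ^ n) integrable_on {T - Delta m T .. T + Delta m T}"
proof (rule integrable_continuous_interval)
  have D: "Delta m T \<le> 1" using Delta_bounds[OF T] by simp
  have "continuous_on {T - Delta m T .. T + Delta m T} (\<lambda>t. zeta_deriv m (Complex 1 t))"
    by (rule continuous_on_subset[OF zd_cont_line]) (use T D in auto)
  then show "continuous_on {T - Delta m T .. T + Delta m T} (\<lambda>t. norm (zeta_deriv m (Complex 1 t)) ^ n)"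
    by (intro continuous_intros)
qed

lemma avg_le:
  assumes T: "T \<ge> 32" and B: "\<And>t. t \<in> {T - Delta m T .. T + Delta m T} \<Longrightarrow> norm (zeta_deriv m (Complex 1 t)) ^ n \<le> B"
  shows "1 / (2 * Delta m T) * integral {T - Delta m T .. T + Delta m T} (\<lambda>t. norm (zeta_deriv m (Complex 1 t)) ^ n) \<le> B"
proof -
  define D where "D = Delta m T"
  have D: "0 < D" "D \<le> 1" using Delta_bounds[OF T] by (auto simp: D_def)
  have "integral {T - D .. T + D} (\<lambda>t. norm (zeta_deriv m (Complex 1 t)) ^ n) \<le> integral {T - D .. T + D} (\<lambda>t. B)"
    by (rule integral_le[OF int_cont[OF T, of m n, folded D_def]]) (use B in \<open>auto simp: D_def\<close>)
  also have "\<dots> = 2 * D * B" using D by simp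
  finally show ?thesis using D by (simp add: D_def[symmetric] field_simps)
qed

lemma avg_ge:
  assumes T: "T \<ge> 32" and B: "\<And>t. t \<in> {T - Delta m T .. T + Delta m T} \<Longrightarrow> B \<le> norm (zeta_deriv m (Complex 1 t)) ^ n"
  shows "B \<le> 1 / (2 * Delta m T) * integral {T - Delta m T .. T + Delta m T} (\<lambda>t. norm (zeta_deriv m (Complex 1 t)) ^ n)"
proof -
  define D where "D = Delta m T"
  have D: "0 < D" "D \<le> 1" using Delta_bounds[OF T] by (auto simp: D_def)
  have "integral {T - D .. T + D} (\<lambda>t. B) \<le> integral {T - D .. T + D} (\<lambda>t. norm (zeta_deriv m (Complex 1 t)) ^ n)"
    by (rule integral_le[OF _ int_cont[OF T, of m n, folded D_def]]) (use B in \<open>auto simp: D_def\<close>)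
  moreover have "integral {T - D .. T + D} (\<lambda>t. B) = 2 * D * B" using D by simp
  ultimately show ?thesis using D by (simp add: D_def[symmetric] field_simps)
qed

lemma avg_nonneg:
  assumes T: "T \<ge> 32"
  shows "0 \<le> 1 / (2 * Delta m T) * integral {T - Delta m T .. T + Delta m T} (\<lambda>t. norm (zeta_deriv m (Complex 1 t)) ^ n)"
  by (rule avg_ge[OF T]) simp

lemma dir1:
  assumes H: "\<forall>\<epsilon>::real>0. (\<lambda>t::real. zeta_deriv m (Complex 1 t)) \<in> O[at_top](\<lambda>t. of_real (ln t powr \<epsilon>))"
    and e: "\<epsilon> > 0" and k: "k > 0"
  shows "(\<lambda>T::real. 1 / (2 * Delta m T) * integral {T - Delta m T .. T + Delta m T}
              (\<lambda>t. norm (zeta_deriv m (Complex 1 t)) ^ (2 * k))) \<in> O[at_top](\<lambda>T. ln T powr \<epsilon>)"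
proof -
  define e' where "e' = \<epsilon> / (2 * real k)"
  have e': "e' > 0" using e k by (simp add: e'_def)
  obtain c where c: "c > 0" "eventually (\<lambda>t. norm (zeta_deriv m (Complex 1 t)) \<le> c * norm (of_real (ln t powr e') :: complex)) at_top"
    using landau_o.bigE[OF H[rule_format, OF e']] by blast
  obtain x0 where x0: "\<And>t. t \<ge> x0 \<Longrightarrow> norm (zeta_deriv m (Complex 1 t)) \<le> c * norm (of_real (ln t powr e') :: complex)"
    using c(2) by (auto simp: eventually_at_top_linorder)
  define K where "K = c ^ (2 * k) * 2 powr \<epsilon>"
  have "eventually (\<lambda>T. norm (1 / (2 * Delta m T) * integral {T - Delta m T .. T + Delta m T}
              (\<lambda>t. norm (zeta_deriv m (Complex 1 t)) ^ (2 * k))) \<le> K * norm (ln T powr \<epsilon>)) at_top"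
    unfolding eventually_at_top_linorder
  proof (intro exI[of _ "max 32 (x0 + 1)"] allI impI)
    fix T :: real assume T: "T \<ge> max 32 (x0 + 1)"
    then have T32: "T \<ge> 32" by simp
    have lT: "ln T \<ge> 2" using ln_ge_2[of T] T by simp
    have D: "0 < Delta m T" "Delta m T \<le> 1" using Delta_bounds[OF T32] by auto
    have bnd: "norm (zeta_deriv m (Complex 1 t)) ^ (2 * k) \<le> K * ln T powr \<epsilon>"
      if t: "t \<in> {T - Delta m T .. T + Delta m T}" for t
    proof -
      have tx: "t \<ge> x0" "t \<ge> 16" "t \<le> T + 1" using t T D by auto
      have lt: "ln t \<ge> 2" using ln_ge_2 tx by simp
      have "norm (zeta_deriv m (Complex 1 t)) \<le> c * ln t powr e'" using x0[OF tx(1)] by simp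
      then have "norm (zeta_deriv m (Complex 1 t)) ^ (2 * k) \<le> (c * ln t powr e') ^ (2 * k)"
        by (intro power_mono) auto
      also have "\<dots> = c ^ (2 * k) * ln t powr \<epsilon>"
        using lt k by (simp add: power_mult_distrib powr_power e'_def)
      also have "ln t powr \<epsilon> \<le> (2 * ln T) powr \<epsilon>"
      proof (rule powr_mono2)
        have "ln t \<le> ln (T * T)"
        proof -
          have "32 * T \<le> T * T" using T32 by (intro mult_right_mono) auto
          then have TT: "t \<le> T * T" using tx T32 by linarith
          show ?thesis using TT tx T32 by (subst ln_le_cancel_iff) auto
        qed
        also have "\<dots> = 2 * ln T" using T32 by (simp add: ln_mult)
        finally show "ln t \<le> 2 * ln T" .
      qed (use e lt in auto)
      also have "(2 * ln T) powr \<epsilon> = 2 powr \<epsilon> * ln T powr \<epsilon>" using lT by (simp add: powr_mult)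
      finally show ?thesis using c by (simp add: K_def mult.assoc mult_left_mono)
    qed
    have "1 / (2 * Delta m T) * integral {T - Delta m T .. T + Delta m T} (\<lambda>t. norm (zeta_deriv m (Complex 1 t)) ^ (2 * k))
        \<le> K * ln T powr \<epsilon>" by (rule avg_le[OF T32 bnd])
    moreover have "0 \<le> 1 / (2 * Delta m T) * integral {T - Delta m T .. T + Delta m T} (\<lambda>t. norm (zeta_deriv m (Complex 1 t)) ^ (2 * k))"
      by (rule avg_nonneg[OF T32])
    ultimately show "norm (1 / (2 * Delta m T) * integral {T - Delta m T .. T + Delta m T}
              (\<lambda>t. norm (zeta_deriv m (Complex 1 t)) ^ (2 * k))) \<le> K * norm (ln T powr \<epsilon>)"
      by simp
  qed
  then show ?thesis by (rule bigoI)
qed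

lemma dir2:
  assumes H: "\<forall>\<epsilon>::real>0. \<forall>k::nat. k > 0 \<longrightarrow>
        (\<lambda>T::real. 1 / (2 * Delta m T) *
            integral {T - Delta m T .. T + Delta m T}
              (\<lambda>t. norm (zeta_deriv m (Complex 1 t)) ^ (2 * k)))
        \<in> O[at_top](\<lambda>T. ln T powr \<epsilon>)"
    and e: "\<epsilon> > 0"
  shows "(\<lambda>t::real. zeta_deriv m (Complex 1 t)) \<in> O[at_top](\<lambda>t. of_real (ln t powr \<epsilon>))"
proof -
  have "(\<lambda>T::real. 1 / (2 * Delta m T) * integral {T - Delta m T .. T + Delta m T}
              (\<lambda>t. norm (zeta_deriv m (Complex 1 t)) ^ (2 * 1))) \<in> O[at_top](\<lambda>T. ln T powr (2 * \<epsilon>))"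
    by (rule H[rule_format]) (use e in auto)
  then obtain c where c: "c > 0" "eventually (\<lambda>T. norm (1 / (2 * Delta m T) * integral {T - Delta m T .. T + Delta m T}
              (\<lambda>t. norm (zeta_deriv m (Complex 1 t)) ^ (2 * 1))) \<le> c * norm (ln T powr (2 * \<epsilon>))) at_top"
    using landau_o.bigE by blast
  obtain x0 where x0: "\<And>T. T \<ge> x0 \<Longrightarrow> norm (1 / (2 * Delta m T) * integral {T - Delta m T .. T + Delta m T}
              (\<lambda>t. norm (zeta_deriv m (Complex 1 t)) ^ (2 * 1))) \<le> c * norm (ln T powr (2 * \<epsilon>))"
    using c(2) by (auto simp: eventually_at_top_linorder)
  obtain L0 where L0: "\<And>T t. T \<ge> 32 \<Longrightarrow> \<bar>t - T\<bar> \<le> 1 \<Longrightarrow>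
     cmod (zeta_deriv m (Complex 1 t) - zeta_deriv m (Complex 1 T)) \<le> L0 * (ln T)^(m+2) * \<bar>t - T\<bar>"
    using zd_lipschitz by blast
  define L where "L = \<bar>L0\<bar>"
  have L0': "cmod (zeta_deriv m (Complex 1 t) - zeta_deriv m (Complex 1 T)) \<le> L * (ln T)^(m+2) * \<bar>t - T\<bar>"
    if "T \<ge> 32" "\<bar>t - T\<bar> \<le> 1" for T t
  proof -
    have "L0 * (ln T)^(m+2) * \<bar>t - T\<bar> \<le> L * (ln T)^(m+2) * \<bar>t - T\<bar>"
      using that ln_ge_2[of T] by (intro mult_right_mono) (auto simp: L_def)
    then show ?thesis using L0[OF that] by linarith
  qed
  define K where "K = L + sqrt c"
  have "eventually (\<lambda>T. norm (zeta_deriv m (Complex 1 T)) \<le> K * norm (of_real (ln T powr \<epsilon>) :: complex)) at_top"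
    unfolding eventually_at_top_linorder
  proof (intro exI[of _ "max 32 x0"] allI impI)
    fix T :: real assume T: "T \<ge> max 32 x0"
    then have T32: "T \<ge> 32" by simp
    have lT: "ln T \<ge> 2" using ln_ge_2[of T] T by simp
    have D: "0 < Delta m T" "Delta m T \<le> 1" using Delta_bounds[OF T32] by auto
    define P where "P = ln T powr \<epsilon>"
    have P1: "P \<ge> 1" using lT e by (simp add: P_def ge_one_powr_ge_zero)
    define a where "a = norm (zeta_deriv m (Complex 1 T))"
    have "a \<le> L + sqrt c * P"
    proof (cases "a \<le> L")
      case True
      have "0 \<le> sqrt c * P" using c(1) P1 by simp
      then show ?thesis using True by linarith
    next
      case False
      have lb: "(a - L)^2 \<le> norm (zeta_deriv m (Complex 1 t)) ^ (2 * 1)"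
        if t: "t \<in> {T - Delta m T .. T + Delta m T}" for t
      proof -
        have tT: "\<bar>t - T\<bar> \<le> Delta m T" using t by (auto simp: abs_le_iff)
        have "cmod (zeta_deriv m (Complex 1 t) - zeta_deriv m (Complex 1 T)) \<le> L * (ln T)^(m+2) * \<bar>t - T\<bar>"
          using L0'[OF T32] tT D by simp
        also have "\<dots> \<le> L * (ln T)^(m+2) * Delta m T"
          using tT lT by (intro mult_left_mono) (auto simp: L_def)
        also have "\<dots> = L" using lT by (simp add: Delta_def)
        finally have "cmod (zeta_deriv m (Complex 1 t) - zeta_deriv m (Complex 1 T)) \<le> L" .
        then have "a - L \<le> norm (zeta_deriv m (Complex 1 t))"
          using norm_triangle_ineq2[of "zeta_deriv m (Complex 1 T)" "zeta_deriv m (Complex 1 t)"]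
          by (simp add: a_def norm_minus_commute)
        then show ?thesis using False by (simp add: power_mono)
      qed
      have "(a - L)^2 \<le> 1 / (2 * Delta m T) * integral {T - Delta m T .. T + Delta m T}
              (\<lambda>t. norm (zeta_deriv m (Complex 1 t)) ^ (2 * 1))"
        by (rule avg_ge[OF T32 lb])
      also have "\<dots> \<le> c * norm (ln T powr (2 * \<epsilon>))" (is "?X \<le> _")
      proof -
        have "?X \<le> norm ?X" by (simp only: real_norm_def abs_ge_self)
        also have "\<dots> \<le> c * norm (ln T powr (2 * \<epsilon>))" using x0[of T] T by simp
        finally show ?thesis .
      qed
      also have "norm (ln T powr (2 * \<epsilon>)) = P ^ 2"
      proof -
        have "(ln T powr \<epsilon>)^2 = ln T powr (of_nat 2 * \<epsilon>)" by (rule powr_power) (use lT in simp)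
        then show ?thesis by (simp add: P_def)
      qed
      finally have "(a - L)^2 \<le> c * P^2" .
      also have "c * P^2 = (sqrt c * P)^2" using c(1) by (simp add: power_mult_distrib)
      finally have "(a - L)^2 \<le> (sqrt c * P)^2" .
      moreover have nn: "0 \<le> sqrt c * P" using c(1) P1 by simp
      ultimately have "a - L \<le> sqrt c * P" by (rule power2_le_imp_le)
      then show ?thesis by simp
    qed
    also have "\<dots> \<le> L * P + sqrt c * P"
    proof -
      have "L * 1 \<le> L * P" using P1 by (intro mult_left_mono) (auto simp: L_def)
      then show ?thesis by simp
    qed
    also have "\<dots> = K * norm (of_real (ln T powr \<epsilon>) :: complex)"
      using P1 by (simp add: K_def P_def algebra_simps)
    finally show "norm (zeta_deriv m (Complex 1 T)) \<le> K * norm (of_real (ln T powr \<epsilon>) :: complex)"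
      by (simp add: a_def)
  qed
  then show ?thesis by (rule bigoI)
qed

theorem theorem1:
  fixes m :: nat
  shows "(\<forall>\<epsilon>::real>0. (\<lambda>t::real. zeta_deriv m (Complex 1 t)) \<in> O[at_top](\<lambda>t. of_real (ln t powr \<epsilon>)))
     \<longleftrightarrow>
     (\<forall>\<epsilon>::real>0. \<forall>k::nat. k > 0 \<longrightarrow>
        (\<lambda>T::real. 1 / (2 * Delta m T) *
            integral {T - Delta m T .. T + Delta m T}
              (\<lambda>t. norm (zeta_deriv m (Complex 1 t)) ^ (2 * k)))
        \<in> O[at_top](\<lambda>T. ln T powr \<epsilon>))"
proof
  assume H: "\<forall>\<epsilon>::real>0. (\<lambda>t::real. zeta_deriv m (Complex 1 t)) \<in> O[at_top](\<lambda>t. of_real (ln t powr \<epsilon>))"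
  show "\<forall>\<epsilon>::real>0. \<forall>k::nat. k > 0 \<longrightarrow>
        (\<lambda>T::real. 1 / (2 * Delta m T) *
            integral {T - Delta m T .. T + Delta m T}
              (\<lambda>t. norm (zeta_deriv m (Complex 1 t)) ^ (2 * k)))
        \<in> O[at_top](\<lambda>T. ln T powr \<epsilon>)"
    using dir1[OF H] by blast
next
  assume H: "\<forall>\<epsilon>::real>0. \<forall>k::nat. k > 0 \<longrightarrow>
        (\<lambda>T::real. 1 / (2 * Delta m T) *
            integral {T - Delta m T .. T + Delta m T}
              (\<lambda>t. norm (zeta_deriv m (Complex 1 t)) ^ (2 * k)))
        \<in> O[at_top](\<lambda>T. ln T powr \<epsilon>)"
  show "\<forall>\<epsilon>::real>0. (\<lambda>t::real. zeta_deriv m (Complex 1 t)) \<in> O[at_top](\<lambda>t. of_real (ln t powr \<epsilon>))"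
    using dir2[OF H] by blast
qed

end
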